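(* Let $m,c$ be positive integers, and let $T_n$ denote the number of $(c,m)$-colored $B_n$-partitions. Let $\xi_n$ be the number of non-zero-blocks of a $(c,m)$-colored $B_n$-partition chosen uniformly at random. Then its expectation $E_n$ and variance $V_n$ satisfy \[ E_n=\frac{T_{n+1}}{mT_n}-\frac{1+c}{m},\qquad V_n=\frac{T_{n+2}}{m^2T_n}-\frac{T_{n+1}^2}{m^2T_n^2}-\frac1m . \]
   Context: Let $n,m,c$ be positive integers, let $C_1$ be a list of $c$ colors and $C_2$ a list of $m$ colors. A $(c,m)$-colored $B_n$-partition is a set partition $\pi$ of $[n]\cup\{0\}$ together with a coloring of the elements of $[n]$ defined as follows. For $x\in[n]\cup\{0\}$ let $b_x$ be the block of $\pi$ containing $x$. The block $b_0$ is called the zero-block, and every other block is a non-zero-block. Each $x\in[n]$ receives a color according to these rules: if $x=\min b_x$, then $x$ gets the first color of $C_2$; if $x\ne\min b_x$ and $x\in b_0$, then $x$ gets an arbitrary color from $C_1$; if $x\ne \min b_x$ and $x\notin b_0$, then $x$ gets an arbitrary color from $C_2$. Two such objects are equal exactly when they have the same underlying partition and the same coloring. *)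

theory Defs
  imports "HOL-Probability.Probability" "HOL-Library.Disjoint_Sets"
begin

text \<open>Colors: C1 is represented by indices {0..<c}, C2 by {0..<m}; the first color
of C2 is 0. A coloring is a function nat \<Rightarrow> nat, fixed to 0 outside [n] so that
equality of objects is equality of (partition, coloring) pairs.\<close>

definition colored_B_partitions :: "nat \<Rightarrow> nat \<Rightarrow> nat \<Rightarrow> (nat set set \<times> (nat \<Rightarrow> nat)) set" where
  "colored_B_partitions c m n =
     {(P, col). partition_on {0..n} P
        \<and> (\<forall>x. x \<notin> {1..n} \<longrightarrow> col x = 0)
        \<and> (\<forall>b\<in>P. \<forall>x\<in>b. x \<noteq> 0 \<longrightarrow>
              (if x = Min b then col x = 0
               else if 0 \<in> b then col x < c
               else col x < m))}"

definition num_nonzero_blocks :: "nat set set \<times> (nat \<Rightarrow> nat) \<Rightarrow> nat" where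
  "num_nonzero_blocks \<sigma> = card {b \<in> fst \<sigma>. 0 \<notin> b}"

definition T_count :: "nat \<Rightarrow> nat \<Rightarrow> nat \<Rightarrow> nat" where
  "T_count c m n = card (colored_B_partitions c m n)"

definition E_nzb :: "nat \<Rightarrow> nat \<Rightarrow> nat \<Rightarrow> real" where
  "E_nzb c m n = measure_pmf.expectation (pmf_of_set (colored_B_partitions c m n))
                   (\<lambda>\<sigma>. real (num_nonzero_blocks \<sigma>))"

definition V_nzb :: "nat \<Rightarrow> nat \<Rightarrow> nat \<Rightarrow> real" where
  "V_nzb c m n = measure_pmf.variance (pmf_of_set (colored_B_partitions c m n))
                   (\<lambda>\<sigma>. real (num_nonzero_blocks \<sigma>))"

end

theory Submission imports Defs begin

abbreviation CBP where "CBP \<equiv> colored_B_partitions"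

definition ext_s :: "nat \<Rightarrow> nat set set \<times> (nat \<Rightarrow> nat) \<Rightarrow> nat set set \<times> (nat \<Rightarrow> nat)" where
  "ext_s N \<sigma> = (insert {N} (fst \<sigma>), snd \<sigma>)"
definition ext_b :: "nat \<Rightarrow> nat set \<Rightarrow> nat \<Rightarrow> nat set set \<times> (nat \<Rightarrow> nat) \<Rightarrow> nat set set \<times> (nat \<Rightarrow> nat)" where
  "ext_b N b j \<sigma> = (insert (insert N b) (fst \<sigma> - {b}), (snd \<sigma>)(N := j))"
definition restr :: "nat \<Rightarrow> nat set set \<times> (nat \<Rightarrow> nat) \<Rightarrow> nat set set \<times> (nat \<Rightarrow> nat)" where
  "restr N \<sigma> = ((\<lambda>b. b - {N}) ` fst \<sigma> - {{}}, (snd \<sigma>)(N := 0))"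
definition bnd :: "nat \<Rightarrow> nat \<Rightarrow> nat set \<Rightarrow> nat" where
  "bnd c m b = (if 0 \<in> b then c else m)"
definition fib where
  "fib c m N \<sigma> = insert (ext_s N \<sigma>) (\<Union>b\<in>fst \<sigma>. (\<lambda>j. ext_b N b j \<sigma>) ` {..<bnd c m b})"

lemma CBP_D:
  assumes "(P, col) \<in> CBP c m n"
  shows "partition_on {0..n} P" "\<And>x. x \<notin> {1..n} \<Longrightarrow> col x = 0"
    "\<And>b x. b \<in> P \<Longrightarrow> x \<in> b \<Longrightarrow> x \<noteq> 0 \<Longrightarrow> (if x = Min b then col x = 0
               else if 0 \<in> b then col x < c else col x < m)"
proof -
  have h: "partition_on {0..n} P \<and> (\<forall>x. x \<notin> {1..n} \<longrightarrow> col x = 0)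
        \<and> (\<forall>b\<in>P. \<forall>x\<in>b. x \<noteq> 0 \<longrightarrow>
              (if x = Min b then col x = 0
               else if 0 \<in> b then col x < c
               else col x < m))"
    using assms unfolding colored_B_partitions_def mem_Collect_eq prod.case .
  show "partition_on {0..n} P" using conjunct1[OF h] .
  have h2: "\<forall>x. x \<notin> {1..n} \<longrightarrow> col x = 0" using conjunct1[OF conjunct2[OF h]] .
  have h3: "\<forall>b\<in>P. \<forall>x\<in>b. x \<noteq> 0 \<longrightarrow>
              (if x = Min b then col x = 0 else if 0 \<in> b then col x < c else col x < m)"
    using conjunct2[OF conjunct2[OF h]] .
  show "col x = 0" if "x \<notin> {1..n}" for x using mp[OF spec[OF h2, of x] that] .
  show "if x = Min b then col x = 0 else if 0 \<in> b then col x < c else col x < m"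
    if "b \<in> P" "x \<in> b" "x \<noteq> 0" for b x
    using mp[OF bspec[OF bspec[OF h3 that(1)] that(2)] that(3)] .
qed

lemma part_blocks:
  assumes "partition_on {0..(n::nat)} P" "b \<in> P"
  shows "b \<subseteq> {0..n}" "b \<noteq> {}" "finite b"
proof -
  have U: "\<Union>P = {0..n}" using partition_onD1[OF assms(1)] by (rule sym)
  show s: "b \<subseteq> {0..n}" unfolding U[symmetric] using assms(2) by (rule Union_upper)
  show "b \<noteq> {}" using partition_onD3[OF assms(1)] assms(2) by metis
  show "finite b" using s by (rule finite_subset) simp
qed

lemma part_disj:
  assumes "partition_on A P" "b \<in> P" "b' \<in> P" "x \<in> b" "x \<in> b'"
  shows "b = b'"
proof (rule ccontr)
  assume "b \<noteq> b'"
  then have "b \<inter> b' = {}" using disjointD[OF partition_onD2[OF assms(1)] assms(2,3)] by simp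
  then show False using assms(4,5) by blast
qed

lemma part_notN:
  assumes "partition_on {0..n} P" "q \<in> P"
  shows "Suc n \<notin> q"
proof
  assume "Suc n \<in> q"
  then have "Suc n \<in> {0..n}" using part_blocks(1)[OF assms] by blast
  then show False by simp
qed

lemma restr_ext_s:
  assumes "(P, col) \<in> CBP c m n"
  shows "restr (Suc n) (ext_s (Suc n) (P, col)) = (P, col)"
proof -
  have p: "partition_on {0..n} P" using CBP_D(1)[OF assms] .
  have "(\<lambda>b. b - {Suc n}) ` insert {Suc n} P - {{}} = P"
  proof -
    have "(\<lambda>b. b - {Suc n}) ` P = (\<lambda>b. b) ` P"
      using part_notN[OF p] by (intro image_cong refl) auto
    then have "(\<lambda>b. b - {Suc n}) ` P = P" by simp
    then show ?thesis using part_blocks(2)[OF p] by auto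
  qed
  moreover have "col(Suc n := 0) = col" using CBP_D(2)[OF assms, of "Suc n"] by auto
  ultimately show ?thesis by (simp add: restr_def ext_s_def)
qed

lemma restr_ext_b:
  assumes "(P, col) \<in> CBP c m n" "b \<in> P"
  shows "restr (Suc n) (ext_b (Suc n) b j (P, col)) = (P, col)"
proof -
  have p: "partition_on {0..n} P" using CBP_D(1)[OF assms(1)] .
  have "(\<lambda>b. b - {Suc n}) ` insert (insert (Suc n) b) (P - {b}) = insert b (P - {b})"
  proof -
    have "(\<lambda>b. b - {Suc n}) ` (P - {b}) = (\<lambda>b. b) ` (P - {b})"
      using part_notN[OF p] by (intro image_cong refl) auto
    then have "(\<lambda>b. b - {Suc n}) ` (P - {b}) = P - {b}" by simp
    moreover have "insert (Suc n) b - {Suc n} = b" using part_blocks(1)[OF p assms(2)] by auto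
    ultimately show ?thesis by simp
  qed
  also have "\<dots> = P" using assms(2) by auto
  finally have "(\<lambda>b. b - {Suc n}) ` insert (insert (Suc n) b) (P - {b}) - {{}} = P"
    using part_blocks(2)[OF p] by auto
  moreover have "(col(Suc n := j))(Suc n := 0) = col" using CBP_D(2)[OF assms(1), of "Suc n"] by auto
  ultimately show ?thesis by (simp add: restr_def ext_b_def)
qed

lemma ext_s_mem:
  assumes "(P, col) \<in> CBP c m n"
  shows "ext_s (Suc n) (P, col) \<in> CBP c m (Suc n)"
proof -
  have p: "partition_on {0..n} P" using CBP_D(1)[OF assms] .
  have d: "disjnt {Suc n} (\<Union>P)" using part_notN[OF p] by (auto simp: disjnt_def)
  have e: "{0..Suc n} - {Suc n} = {0..n}" by auto
  have p2: "partition_on {0..Suc n} (insert {Suc n} P)"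
    using partition_on_insert[OF d] p e by auto
  have c0: "col (Suc n) = 0" using CBP_D(2)[OF assms, of "Suc n"] by auto
  show ?thesis unfolding ext_s_def colored_B_partitions_def
    using p2 c0 CBP_D(2,3)[OF assms] by auto
qed

lemma ext_b_mem:
  assumes "(P, col) \<in> CBP c m n" "b \<in> P" "j < bnd c m b"
  shows "ext_b (Suc n) b j (P, col) \<in> CBP c m (Suc n)"
proof -
  have p: "partition_on {0..n} P" using CBP_D(1)[OF assms(1)] .
  have bs: "b \<subseteq> {0..n}" "b \<noteq> {}" "finite b" using part_blocks[OF p assms(2)] by auto
  have U: "\<Union>P = {0..n}" using partition_onD1[OF p] by auto
  have p2: "partition_on {0..Suc n} (insert (insert (Suc n) b) (P - {b}))"
    unfolding partition_on_def
  proof (intro conjI)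
    show "\<Union> (insert (insert (Suc n) b) (P - {b})) = {0..Suc n}"
      using U assms(2) by (auto simp: le_Suc_eq)
    show "{} \<notin> insert (insert (Suc n) b) (P - {b})" using partition_onD3[OF p] by auto
    show "disjoint (insert (insert (Suc n) b) (P - {b}))"
      unfolding disjoint_def
    proof (intro ballI impI)
      fix x y assume x: "x \<in> insert (insert (Suc n) b) (P - {b})"
        and y: "y \<in> insert (insert (Suc n) b) (P - {b})" and xy: "x \<noteq> y"
      have nN: "\<And>q. q \<in> P \<Longrightarrow> Suc n \<notin> q" using part_notN[OF p] by auto
      have dj: "\<And>q q'. q \<in> P \<Longrightarrow> q' \<in> P \<Longrightarrow> q \<noteq> q' \<Longrightarrow> q \<inter> q' = {}"
        using partition_onD2[OF p] unfolding disjoint_def by auto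
      show "x \<inter> y = {}"
        using x y xy nN dj assms(2) by auto
    qed
  qed
  have Mn: "Min (insert (Suc n) b) = Min b"
    using bs by (subst Min_insert) (auto intro!: min_absorb2 order.trans[OF Min_le] simp: subset_iff)
  have Mb: "Min b \<in> b" using bs by auto
  have c0: "\<And>x. x \<notin> {1..Suc n} \<Longrightarrow> (col(Suc n := j)) x = 0" using CBP_D(2)[OF assms(1)] by auto
  have cb: "\<forall>x\<in>insert (Suc n) b. x \<noteq> 0 \<longrightarrow> (if x = Min (insert (Suc n) b) then (col(Suc n := j)) x = 0
               else if 0 \<in> insert (Suc n) b then (col(Suc n := j)) x < c else (col(Suc n := j)) x < m)"
  proof (intro ballI impI)
    fix x assume x: "x \<in> insert (Suc n) b" "x \<noteq> 0"
    show "if x = Min (insert (Suc n) b) then (col(Suc n := j)) x = 0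
               else if 0 \<in> insert (Suc n) b then (col(Suc n := j)) x < c else (col(Suc n := j)) x < m"
    proof (cases "x = Suc n")
      case True
      have "Min b \<in> {0..n}" using Mb bs(1) by blast
      then have "x \<noteq> Min b" using True by auto
      then show ?thesis using True Mn assms(3) by (auto simp: bnd_def)
    next
      case False
      then show ?thesis using x Mn CBP_D(3)[OF assms(1,2), of x] by auto
    qed
  qed
  have co: "\<forall>b'\<in>P - {b}. \<forall>x\<in>b'. x \<noteq> 0 \<longrightarrow> (if x = Min b' then (col(Suc n := j)) x = 0
               else if 0 \<in> b' then (col(Suc n := j)) x < c else (col(Suc n := j)) x < m)"
  proof (intro ballI impI)
    fix b' x assume b': "b' \<in> P - {b}" and x: "x \<in> b'" "x \<noteq> 0"
    have "x \<noteq> Suc n" using part_notN[OF p, of b'] b' x by auto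
    then have cx: "(col(Suc n := j)) x = col x" by simp
    show "if x = Min b' then (col(Suc n := j)) x = 0
               else if 0 \<in> b' then (col(Suc n := j)) x < c else (col(Suc n := j)) x < m"
    proof -
      have bP: "b' \<in> P" using b' by simp
      show ?thesis unfolding cx by (rule CBP_D(3)[OF assms(1) bP x])
    qed
  qed
  have c0': "\<forall>x. x \<notin> {1..Suc n} \<longrightarrow> (col(Suc n := j)) x = 0" using c0 by blast
  have all: "\<forall>b'\<in>insert (insert (Suc n) b) (P - {b}). \<forall>x\<in>b'. x \<noteq> 0 \<longrightarrow> (if x = Min b' then (col(Suc n := j)) x = 0
               else if 0 \<in> b' then (col(Suc n := j)) x < c else (col(Suc n := j)) x < m)"
  proof (rule ballI)
    fix b' assume "b' \<in> insert (insert (Suc n) b) (P - {b})"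
    then consider "b' = insert (Suc n) b" | "b' \<in> P - {b}" by blast
    then show "\<forall>x\<in>b'. x \<noteq> 0 \<longrightarrow> (if x = Min b' then (col(Suc n := j)) x = 0
               else if 0 \<in> b' then (col(Suc n := j)) x < c else (col(Suc n := j)) x < m)"
    proof cases
      case 1 then show ?thesis using cb by (simp only:)
    next
      case 2 then show ?thesis by (rule bspec[OF co])
    qed
  qed
  show ?thesis unfolding ext_b_def colored_B_partitions_def mem_Collect_eq prod.case fst_conv snd_conv
    using p2 c0' all by (intro conjI)
qed


lemma sub_le: "b \<subseteq> {0..(N::nat)} \<Longrightarrow> \<forall>y\<in>b. y \<le> N"
proof
  fix y assume "b \<subseteq> {0..N}" "y \<in> b"
  then have "y \<in> {0..N}" by blast
  then show "y \<le> N" by simp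
qed

lemma Min_remove_max:
  assumes "finite b" "b - {N} \<noteq> {}" "\<forall>y\<in>b. y \<le> N"
  shows "Min (b - {N}) = Min b"
proof -
  have bne: "b \<noteq> {}" using assms(2) by auto
  have M: "Min b \<in> b" using assms(1) bne by simp
  have "Min b \<noteq> N"
  proof
    assume "Min b = N"
    obtain y where y: "y \<in> b" "y \<noteq> N" using assms(2) by auto
    have "Min b \<le> y" using assms(1) y(1) by simp
    then show False using y assms(3) \<open>Min b = N\<close> by fastforce
  qed
  then have "Min b \<in> b - {N}" using M by auto
  moreover have "\<forall>y\<in>b - {N}. Min b \<le> y" using assms(1) by simp
  ultimately show ?thesis using assms(1) by (intro Min_eqI) auto
qed

lemma restr_mem:
  assumes "(Q, col) \<in> CBP c m (Suc n)"
  shows "restr (Suc n) (Q, col) \<in> CBP c m n"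
proof -
  define N where "N = Suc n"
  have q: "partition_on {0..N} Q" using CBP_D[OF assms] N_def by auto
  define F where "F = (\<lambda>b::nat set. b - {N})"
  have "partition_on (F {0..N}) (F ` Q - {{}})"
    by (rule partition_on_transform[OF q]) (auto simp: F_def disjnt_def)
  moreover have "F {0..N} = {0..n}" by (auto simp: F_def N_def)
  ultimately have p: "partition_on {0..n} (F ` Q - {{}})" by simp
  have c0: "\<forall>x. x \<notin> {1..n} \<longrightarrow> (col(N := 0)) x = 0"
    using CBP_D(2)[OF assms] by (auto simp: N_def)
  have cb: "\<forall>b'\<in>F ` Q - {{}}. \<forall>x\<in>b'. x \<noteq> 0 \<longrightarrow> (if x = Min b' then (col(N := 0)) x = 0
               else if 0 \<in> b' then (col(N := 0)) x < c else (col(N := 0)) x < m)"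
  proof (intro ballI impI)
    fix b' x assume b': "b' \<in> F ` Q - {{}}" and x: "x \<in> b'" "x \<noteq> 0"
    obtain b where b: "b \<in> Q" "b' = b - {N}" "b - {N} \<noteq> {}" using b' by (auto simp: F_def)
    have bs: "b \<subseteq> {0..N}" "finite b" using part_blocks[OF q b(1)] by auto
    have Mn: "Min b' = Min b" using Min_remove_max[OF bs(2) b(3) sub_le[OF bs(1)]] b(2) by auto
    have xN: "x \<noteq> N" "x \<in> b" using x b(2) by auto
    have z: "(0 \<in> b') = (0 \<in> b)" using b(2) by (auto simp: N_def)
    show "if x = Min b' then (col(N := 0)) x = 0
               else if 0 \<in> b' then (col(N := 0)) x < c else (col(N := 0)) x < m"
      using CBP_D(3)[OF assms b(1) xN(2) x(2)] xN(1) Mn z by auto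
  qed
  have "restr (Suc n) (Q, col) = (F ` Q - {{}}, col(N := 0))" by (simp add: restr_def F_def N_def)
  then show ?thesis unfolding colored_B_partitions_def mem_Collect_eq prod.case
    using p c0 cb by simp
qed

lemma mem_fib_restr:
  assumes "(Q, col) \<in> CBP c m (Suc n)"
  shows "(Q, col) \<in> fib c m (Suc n) (restr (Suc n) (Q, col))"
proof -
  define N where "N = Suc n"
  have q: "partition_on {0..N} Q" using CBP_D[OF assms] N_def by auto
  have "N \<in> {0..N}" by simp
  then have "N \<in> \<Union>Q" unfolding partition_onD1[OF q] .
  then obtain B where B: "B \<in> Q" "N \<in> B" by blast
  have oth: "\<And>b. b \<in> Q \<Longrightarrow> b \<noteq> B \<Longrightarrow> N \<notin> b" using part_disj[OF q] B by blast
  have ne: "{} \<notin> Q" using partition_onD3[OF q] .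
  have img: "(\<lambda>b. b - {N}) ` Q = insert (B - {N}) (Q - {B})"
  proof -
    have "(\<lambda>b. b - {N}) ` (Q - {B}) = (\<lambda>b. b) ` (Q - {B})"
      using oth by (intro image_cong refl) auto
    moreover have "Q = insert B (Q - {B})" using B by auto
    ultimately show ?thesis by (metis image_ident image_insert)
  qed
  have rs: "restr (Suc n) (Q, col) = ((\<lambda>b. b - {N}) ` Q - {{}}, col(N := 0))"
    by (simp add: restr_def N_def)
  have Bs: "B \<subseteq> {0..N}" "finite B" using part_blocks[OF q B(1)] by auto
  show ?thesis
  proof (cases "B - {N} = {}")
    case True
    then have BN: "B = {N}" using B by auto
    have cN: "col N = 0" using CBP_D(3)[OF assms B(1), of N] BN by (auto simp: N_def)
    have "(\<lambda>b. b - {N}) ` Q - {{}} = Q - {B}" using img True ne by auto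
    moreover have "insert {N} (Q - {B}) = Q" using BN B by auto
    moreover have "col(N := 0) = col" using cN by auto
    ultimately have "ext_s (Suc n) (restr (Suc n) (Q, col)) = (Q, col)"
      using rs by (simp add: ext_s_def N_def)
    then show ?thesis unfolding fib_def by (metis insertI1)
  next
    case False
    define b0 where "b0 = B - {N}"
    have r1: "(\<lambda>b. b - {N}) ` Q - {{}} = insert b0 (Q - {B})" using img False ne b0_def by auto
    have b0n: "b0 \<notin> Q - {B}"
    proof
      assume "b0 \<in> Q - {B}"
      moreover obtain y where "y \<in> b0" using False b0_def by auto
      ultimately show False using part_disj[OF q, of b0 B y] B b0_def by auto
    qed
    have Mn: "Min b0 = Min B" using Min_remove_max[OF Bs(2) False sub_le[OF Bs(1)]] b0_def by auto
    have "finite b0" "b0 \<noteq> {}" using False b0_def Bs(2) by auto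
    then have "Min b0 \<in> b0" by (rule Min_in)
    then have NM: "N \<noteq> Min B" using Mn b0_def by auto
    have jb: "col N < bnd c m b0"
      using CBP_D(3)[OF assms B(1), of N] B(2) NM by (auto simp: bnd_def N_def b0_def)
    have iB: "insert N b0 = B" using B(2) b0_def by auto
    have e1: "insert (insert N b0) (insert b0 (Q - {B}) - {b0}) = Q"
      unfolding iB using b0n B(1) by auto
    have "ext_b (Suc n) b0 (col N) (restr (Suc n) (Q, col)) = (Q, col)"
      using rs r1 e1 by (simp add: ext_b_def N_def)
    moreover have "b0 \<in> fst (restr (Suc n) (Q, col))" using rs r1 by simp
    ultimately show ?thesis unfolding fib_def using jb by (metis (no_types, lifting) UN_I imageI insertI2 lessThan_iff)
  qed
qed

abbreviation nz where "nz \<equiv> num_nonzero_blocks"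

lemma L1: "finite {P. partition_on {0..(n::nat)} P}" by (rule finitely_many_partition_on) simp
lemma L2: "finite {f::nat\<Rightarrow>nat. \<forall>x. (x \<in> {1..n} \<longrightarrow> f x \<in> {..<c+m+1}) \<and> (x \<notin> {1..n} \<longrightarrow> f x = 0)}"
  using finite_set_of_finite_funs[of "{1..n}" "{..<c+m+1}" 0] by simp
lemma L3: "finite ({P. partition_on {0..(n::nat)} P} \<times> {f::nat\<Rightarrow>nat. \<forall>x. (x \<in> {1..n} \<longrightarrow> f x \<in> {..<c+m+1}) \<and> (x \<notin> {1..n} \<longrightarrow> f x = 0)})"
  by (rule finite_cartesian_product[OF L1 L2])

lemma CBP_sub: "CBP c m n \<subseteq> {P. partition_on {0..n} P} \<times>
      {f. \<forall>x. (x \<in> {1..n} \<longrightarrow> f x \<in> {..<c+m+1}) \<and> (x \<notin> {1..n} \<longrightarrow> f x = 0)}"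
proof (rule subsetI)
  fix \<sigma> assume s: "\<sigma> \<in> CBP c m n"
  obtain P col where sp: "\<sigma> = (P, col)" by (cases \<sigma>)
  have s': "(P, col) \<in> CBP c m n" using s sp by simp
  have p: "partition_on {0..n} P" using CBP_D(1)[OF s'] .
  have cb: "col x < c + m + 1" if x: "x \<in> {1..n}" for x
  proof -
    have x0: "x \<in> {0..n}" "x \<noteq> 0" using x by auto
    have "x \<in> \<Union>P" using x0(1) unfolding partition_onD1[OF p] .
    then obtain b where b: "b \<in> P" "x \<in> b" by blast
    have "if x = Min b then col x = 0 else if 0 \<in> b then col x < c else col x < m"
      using CBP_D(3)[OF s' b x0(2)] .
    then show ?thesis by (cases "x = Min b"; cases "0 \<in> b") auto
  qed
  have c2: "col x = 0" if "x \<notin> {1..n}" for x using CBP_D(2)[OF s' that] .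
  have hc: "\<forall>x. (x \<in> {1..n} \<longrightarrow> col x \<in> {..<c+m+1}) \<and> (x \<notin> {1..n} \<longrightarrow> col x = 0)"
    using cb c2 by simp
  show "\<sigma> \<in> {P. partition_on {0..n} P} \<times>
      {f. \<forall>x. (x \<in> {1..n} \<longrightarrow> f x \<in> {..<c+m+1}) \<and> (x \<notin> {1..n} \<longrightarrow> f x = 0)}"
    unfolding sp using p hc by simp
qed

lemma CBP_finite: "finite (CBP c m n)"
  by (rule finite_subset[OF CBP_sub L3])

lemma CBP_nonempty:
  assumes "c > 0"
  shows "({{0..n}}, \<lambda>_. 0) \<in> CBP c m n"
  unfolding colored_B_partitions_def using assms by (auto intro: partition_on_space)

lemma nz_ext_s:
  assumes "(P, col) \<in> CBP c m n"
  shows "nz (ext_s (Suc n) (P, col)) = Suc (nz (P, col))"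
proof -
  have p: "partition_on {0..n} P" using CBP_D(1)[OF assms] .
  have fin: "finite {b \<in> P. 0 \<notin> b}" using finite_elements[OF _ p] by auto
  have e: "{b \<in> insert {Suc n} P. 0 \<notin> b} = insert {Suc n} {b \<in> P. 0 \<notin> b}" by auto
  have ni: "{Suc n} \<notin> {b \<in> P. 0 \<notin> b}" using part_notN[OF p] by auto
  show ?thesis unfolding num_nonzero_blocks_def ext_s_def fst_conv e
    by (rule card_insert_disjoint[OF fin ni])
qed

lemma nz_ext_b:
  assumes "(P, col) \<in> CBP c m n" "b \<in> P"
  shows "nz (ext_b (Suc n) b j (P, col)) = nz (P, col)"
proof -
  have p: "partition_on {0..n} P" using CBP_D(1)[OF assms(1)] .
  have fin: "finite {b \<in> P. 0 \<notin> b}" using finite_elements[OF _ p] by auto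
  show ?thesis
  proof (cases "0 \<in> b")
    case True
    then have "{b' \<in> insert (insert (Suc n) b) (P - {b}). 0 \<notin> b'} = {b' \<in> P. 0 \<notin> b'}"
      by auto
    then show ?thesis unfolding num_nonzero_blocks_def ext_b_def fst_conv by simp
  next
    case False
    have e: "{b' \<in> insert (insert (Suc n) b) (P - {b}). 0 \<notin> b'}
        = insert (insert (Suc n) b) ({b' \<in> P. 0 \<notin> b'} - {b})" using False by auto
    have ni: "insert (Suc n) b \<notin> {b' \<in> P. 0 \<notin> b'} - {b}" using part_notN[OF p] by auto
    have bi: "b \<in> {b' \<in> P. 0 \<notin> b'}" using False assms(2) by auto
    have "card (insert (insert (Suc n) b) ({b' \<in> P. 0 \<notin> b'} - {b})) = card {b' \<in> P. 0 \<notin> b'}"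
    proof -
      have "card {b' \<in> P. 0 \<notin> b'} > 0" using fin bi card_gt_0_iff by blast
      then show ?thesis using fin ni bi by (simp add: card_Suc_Diff1)
    qed
    then show ?thesis unfolding num_nonzero_blocks_def ext_b_def fst_conv e by simp
  qed
qed

lemma bnd_sum:
  assumes "(P, col) \<in> CBP c m n"
  shows "(\<Sum>b\<in>P. bnd c m b) = c + m * nz (P, col)"
proof -
  have p: "partition_on {0..n} P" using CBP_D(1)[OF assms] .
  have fin: "finite P" using finite_elements[OF _ p] by auto
  have "0 \<in> {0..n}" by simp
  then have "0 \<in> \<Union>P" unfolding partition_onD1[OF p] .
  then obtain B0 where B0: "B0 \<in> P" "0 \<in> B0" by blast
  have s1: "P \<inter> {b. 0 \<in> b} = {B0}"
  proof (intro equalityI subsetI)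
    fix b assume "b \<in> P \<inter> {b. 0 \<in> b}"
    then have bb: "b \<in> P" "0 \<in> b" by auto
    show "b \<in> {B0}" using part_disj[OF p bb(1) B0(1) bb(2) B0(2)] by simp
  next
    fix b assume "b \<in> {B0}" then show "b \<in> P \<inter> {b. 0 \<in> b}" using B0 by simp
  qed
  have s2: "P \<inter> - {b. 0 \<in> b} = {b \<in> P. 0 \<notin> b}" by auto
  show ?thesis unfolding bnd_def sum.If_cases[OF fin] s1 s2
    by (simp add: num_nonzero_blocks_def)
qed

lemma fib_sum:
  fixes g :: "nat \<Rightarrow> real"
  assumes "\<sigma> \<in> CBP c m n"
  shows "(\<Sum>\<tau>\<in>fib c m (Suc n) \<sigma>. g (nz \<tau>)) = real (c + m * nz \<sigma>) * g (nz \<sigma>) + g (nz \<sigma> + 1)"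
proof -
  obtain P col where sp: "\<sigma> = (P, col)" by (cases \<sigma>)
  have s: "(P, col) \<in> CBP c m n" using assms sp by simp
  have p: "partition_on {0..n} P" using CBP_D(1)[OF s] .
  have fin: "finite P" using finite_elements[OF _ p] by auto
  define S where "S = Sigma P (\<lambda>b. {..<bnd c m b})"
  define h where "h = (\<lambda>(b, j). ext_b (Suc n) b j (P, col))"
  have finS: "finite S" using fin by (auto simp: S_def)
  have U: "(\<Union>b\<in>P. (\<lambda>j. ext_b (Suc n) b j (P, col)) ` {..<bnd c m b}) = h ` S"
  proof (intro equalityI subsetI)
    fix \<tau> assume "\<tau> \<in> (\<Union>b\<in>P. (\<lambda>j. ext_b (Suc n) b j (P, col)) ` {..<bnd c m b})"
    then obtain b j where bj: "b \<in> P" "j < bnd c m b" "\<tau> = ext_b (Suc n) b j (P, col)" by blast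
    have "(b, j) \<in> S" using bj by (simp add: S_def)
    moreover have "\<tau> = h (b, j)" using bj by (simp add: h_def)
    ultimately show "\<tau> \<in> h ` S" by blast
  next
    fix \<tau> assume "\<tau> \<in> h ` S"
    then obtain b j where bj: "(b, j) \<in> S" "\<tau> = h (b, j)" by auto
    then have "b \<in> P" "j < bnd c m b" by (auto simp: S_def)
    then show "\<tau> \<in> (\<Union>b\<in>P. (\<lambda>j. ext_b (Suc n) b j (P, col)) ` {..<bnd c m b})"
      using bj(2) by (auto simp: h_def)
  qed
  have inj: "inj_on h S"
  proof (rule inj_onI)
    fix x y assume x: "x \<in> S" and y: "y \<in> S" and e: "h x = h y"
    obtain b j where xb: "x = (b, j)" by (cases x)
    obtain b' j' where yb: "y = (b', j')" by (cases y)
    have bP: "b \<in> P" "b' \<in> P" using x y xb yb by (auto simp: S_def)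
    have e1: "insert (insert (Suc n) b) (P - {b}) = insert (insert (Suc n) b') (P - {b'})"
      and e2: "col(Suc n := j) = col(Suc n := j')"
      using e xb yb by (auto simp: h_def ext_b_def)
    have "insert (Suc n) b \<in> insert (insert (Suc n) b') (P - {b'})" using e1 by blast
    moreover have "insert (Suc n) b \<notin> P" using part_notN[OF p] by auto
    ultimately have "insert (Suc n) b = insert (Suc n) b'" by auto
    then have "b = b'" using part_notN[OF p bP(1)] part_notN[OF p bP(2)]
      by (metis insert_ident)
    moreover have "j = j'" using fun_cong[OF e2, of "Suc n"] by simp
    ultimately show "x = y" using xb yb by simp
  qed
  have nin: "ext_s (Suc n) (P, col) \<notin> h ` S"
  proof
    assume "ext_s (Suc n) (P, col) \<in> h ` S"
    then obtain b j where b: "b \<in> P" and e: "ext_s (Suc n) (P, col) = ext_b (Suc n) b j (P, col)"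
      by (auto simp: S_def h_def)
    then have "{Suc n} \<in> insert (insert (Suc n) b) (P - {b})" by (auto simp: ext_s_def ext_b_def)
    moreover have "{Suc n} \<notin> P" using part_notN[OF p] by auto
    moreover have "b \<noteq> {}" using part_blocks(2)[OF p b] .
    moreover have "Suc n \<notin> b" using part_notN[OF p b] .
    ultimately show False by auto
  qed
  have fibe: "fib c m (Suc n) (P, col) = insert (ext_s (Suc n) (P, col)) (h ` S)"
  proof -
    have "fib c m (Suc n) (P, col) = insert (ext_s (Suc n) (P, col)) (\<Union>b\<in>P. (\<lambda>j. ext_b (Suc n) b j (P, col)) ` {..<bnd c m b})"
      by (simp add: fib_def)
    then show ?thesis unfolding U .
  qed
  have "(\<Sum>\<tau>\<in>h ` S. g (nz \<tau>)) = (\<Sum>x\<in>S. g (nz (h x)))" using sum.reindex[OF inj] by simp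
  also have "\<dots> = (\<Sum>x\<in>S. g (nz (P, col)))"
    by (rule sum.cong) (auto simp: S_def h_def nz_ext_b[OF s])
  also have "\<dots> = real (card S) * g (nz (P, col))" by simp
  also have "card S = c + m * nz (P, col)"
    using fin bnd_sum[OF s] by (simp add: S_def)
  finally have "(\<Sum>\<tau>\<in>h ` S. g (nz \<tau>)) = real (c + m * nz (P, col)) * g (nz (P, col))" .
  then show ?thesis unfolding sp fibe
    using finS nin by (simp add: nz_ext_s[OF s])
qed

lemma restr_fib:
  assumes "\<sigma> \<in> CBP c m n" "\<tau> \<in> fib c m (Suc n) \<sigma>"
  shows "restr (Suc n) \<tau> = \<sigma>"
proof -
  obtain P col where sp: "\<sigma> = (P, col)" by (cases \<sigma>)
  have s: "(P, col) \<in> CBP c m n" using assms sp by simp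
  show ?thesis using assms(2) restr_ext_s[OF s] restr_ext_b[OF s] unfolding sp fib_def by auto
qed

lemma fib_sub:
  assumes "\<sigma> \<in> CBP c m n"
  shows "fib c m (Suc n) \<sigma> \<subseteq> CBP c m (Suc n)"
proof -
  obtain P col where sp: "\<sigma> = (P, col)" by (cases \<sigma>)
  have s: "(P, col) \<in> CBP c m n" using assms sp by simp
  show ?thesis using ext_s_mem[OF s] ext_b_mem[OF s] unfolding sp fib_def by auto
qed

lemma fib_finite:
  assumes "\<sigma> \<in> CBP c m n"
  shows "finite (fib c m (Suc n) \<sigma>)"
proof -
  obtain P col where sp: "\<sigma> = (P, col)" by (cases \<sigma>)
  have s: "(P, col) \<in> CBP c m n" using assms sp by simp
  have p: "partition_on {0..n} P" using CBP_D(1)[OF s] .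
  have fin: "finite P" using finite_elements[OF _ p] by auto
  show ?thesis using fin unfolding sp fib_def by auto
qed

lemma CBP_Suc: "CBP c m (Suc n) = (\<Union>\<sigma>\<in>CBP c m n. fib c m (Suc n) \<sigma>)"
proof
  show "CBP c m (Suc n) \<subseteq> (\<Union>\<sigma>\<in>CBP c m n. fib c m (Suc n) \<sigma>)"
  proof
    fix \<tau> assume t: "\<tau> \<in> CBP c m (Suc n)"
    obtain Q col where tp: "\<tau> = (Q, col)" by (cases \<tau>)
    show "\<tau> \<in> (\<Union>\<sigma>\<in>CBP c m n. fib c m (Suc n) \<sigma>)"
      using restr_mem[OF t[unfolded tp]] mem_fib_restr[OF t[unfolded tp]] tp by blast
  qed
  show "(\<Union>\<sigma>\<in>CBP c m n. fib c m (Suc n) \<sigma>) \<subseteq> CBP c m (Suc n)" using fib_sub by blast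
qed

lemma sum_step:
  fixes g :: "nat \<Rightarrow> real"
  shows "(\<Sum>\<tau>\<in>CBP c m (Suc n). g (nz \<tau>))
       = (\<Sum>\<sigma>\<in>CBP c m n. real (c + m * nz \<sigma>) * g (nz \<sigma>) + g (nz \<sigma> + 1))"
proof -
  have "(\<Sum>\<tau>\<in>CBP c m (Suc n). g (nz \<tau>)) = (\<Sum>\<sigma>\<in>CBP c m n. \<Sum>\<tau>\<in>fib c m (Suc n) \<sigma>. g (nz \<tau>))"
    unfolding CBP_Suc
  proof (rule sum.UNION_disjoint)
    show "finite (CBP c m n)" by (rule CBP_finite)
    show "\<forall>\<sigma>\<in>CBP c m n. finite (fib c m (Suc n) \<sigma>)" using fib_finite by blast
    show "\<forall>A\<in>CBP c m n. \<forall>B\<in>CBP c m n. A \<noteq> B \<longrightarrow> fib c m (Suc n) A \<inter> fib c m (Suc n) B = {}"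
      using restr_fib by blast
  qed
  also have "\<dots> = (\<Sum>\<sigma>\<in>CBP c m n. real (c + m * nz \<sigma>) * g (nz \<sigma>) + g (nz \<sigma> + 1))"
    by (rule sum.cong[OF refl]) (rule fib_sum)
  finally show ?thesis .
qed

theorem theorem3:
  fixes m c n :: nat
  assumes "m > 0" and "c > 0" and "n > 0"
  shows "E_nzb c m n = real (T_count c m (n+1)) / (real m * real (T_count c m n)) - (1 + real c) / real m
     \<and> V_nzb c m n = real (T_count c m (n+2)) / ((real m)^2 * real (T_count c m n))
                    - (real (T_count c m (n+1)))^2 / ((real m)^2 * (real (T_count c m n))^2)
                    - 1 / real m"
proof -
  define S where "S = CBP c m n"
  have fin: "finite S" unfolding S_def by (rule CBP_finite)
  have ne: "S \<noteq> {}" using CBP_nonempty[OF assms(2)] unfolding S_def by blast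
  define T where "T = real (card S)"
  have Tpos: "T > 0" using fin ne by (simp add: T_def card_gt_0_iff)
  define X where "X = (\<lambda>\<sigma>. real (nz \<sigma>))"
  define A where "A = (\<Sum>\<sigma>\<in>S. X \<sigma>)"
  define B where "B = (\<Sum>\<sigma>\<in>S. (X \<sigma>)^2)"
  have lin: "(\<Sum>\<sigma>\<in>S. a + b * X \<sigma> + d * (X \<sigma>)^2) = a * T + b * A + d * B" for a b d
    by (simp add: sum.distrib sum_distrib_left[symmetric] A_def B_def T_def)
  have h1: "real (card (CBP c m (Suc n))) = (real c + 1) * T + real m * A"
  proof -
    have "real (card (CBP c m (Suc n))) = (\<Sum>\<sigma>\<in>S. real (c + m * nz \<sigma>) * 1 + 1)"
      using sum_step[of "\<lambda>_. 1" c m n] by (simp add: S_def)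
    also have "\<dots> = (\<Sum>\<sigma>\<in>S. (real c + 1) + real m * X \<sigma> + 0 * (X \<sigma>)^2)"
      by (rule sum.cong) (auto simp: X_def)
    finally show ?thesis using lin[of "real c + 1" "real m" 0] by simp
  qed
  define G where "G = (\<lambda>k::nat. real c + 1 + real m * real k)"
  have h2: "real (card (CBP c m (Suc (Suc n)))) =
      ((real c + 1)^2 + real m) * T + (2 * (real c + 1) * real m) * A + (real m)^2 * B"
  proof -
    have "real (card (CBP c m (Suc (Suc n)))) = (\<Sum>\<tau>\<in>CBP c m (Suc n). real (c + m * nz \<tau>) * 1 + 1)"
      using sum_step[of "\<lambda>_. 1" c m "Suc n"] by simp
    also have "\<dots> = (\<Sum>\<tau>\<in>CBP c m (Suc n). G (nz \<tau>))"
      by (rule sum.cong) (auto simp: G_def)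
    also have "\<dots> = (\<Sum>\<sigma>\<in>S. real (c + m * nz \<sigma>) * G (nz \<sigma>) + G (nz \<sigma> + 1))"
      using sum_step[of G c m n] by (simp add: S_def)
    also have "\<dots> = (\<Sum>\<sigma>\<in>S. ((real c + 1)^2 + real m) + (2 * (real c + 1) * real m) * X \<sigma> + (real m)^2 * (X \<sigma>)^2)"
      by (rule sum.cong) (auto simp: G_def X_def algebra_simps power2_eq_square)
    finally show ?thesis using lin[of "(real c + 1)^2 + real m" "2 * (real c + 1) * real m" "(real m)^2"] by simp
  qed
  have E: "E_nzb c m n = A / T"
    by (simp add: E_nzb_def integral_pmf_of_set[OF ne[unfolded S_def] fin[unfolded S_def]] A_def T_def X_def S_def)
  have V0: "V_nzb c m n = (\<Sum>\<sigma>\<in>S. (X \<sigma> - A / T)^2) / T"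
    by (simp add: V_nzb_def integral_pmf_of_set[OF ne[unfolded S_def] fin[unfolded S_def]] A_def T_def X_def S_def)
  have "(\<Sum>\<sigma>\<in>S. (X \<sigma> - A / T)^2) = (\<Sum>\<sigma>\<in>S. (A/T)^2 + (- 2 * (A/T)) * X \<sigma> + 1 * (X \<sigma>)^2)"
    by (rule sum.cong) (auto simp: power2_eq_square algebra_simps)
  also have "\<dots> = (A/T)^2 * T + (- 2 * (A/T)) * A + 1 * B" by (rule lin)
  finally have V: "V_nzb c m n = ((A/T)^2 * T + (- 2 * (A/T)) * A + B) / T" using V0 by simp
  have tc: "real (T_count c m n) = T" "real (T_count c m (n+1)) = (real c + 1) * T + real m * A"
    "real (T_count c m (n+2)) = ((real c + 1)^2 + real m) * T + (2 * (real c + 1) * real m) * A + (real m)^2 * B"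
    using h1 h2 by (simp_all add: T_count_def T_def S_def)
  have mpos: "real m > 0" using assms(1) by simp
  show ?thesis unfolding E V tc
    using Tpos mpos by (auto simp: field_simps power2_eq_square)
qed

end
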